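(* Let $\boldsymbol{\varphi}:\mathbb{R}^D\to\mathbb{R}^Y$ be a random feature map utilizing $Y$ random projections $\{\varphi_\alpha\}_{\alpha=1}^Y$, and let $\boldsymbol{\xi}^1,\dots,\boldsymbol{\xi}^K\in\mathbb{R}^D$ be $K$ memories. The random-feature based Distributed-representation Dense Associative Memory (DrDAM), implemented as described in the context (first ProcMems to form $\mathbf{T}$, then $L$ gradient steps each computed by GradComp), takes $O\big(D(YK+L(Y+D))\big)$ time and $O(Y+D)$ peak memory to perform $L$ energy gradient descent steps $\mathbf{x}^{(t)}=\mathbf{x}^{(t-1)}-\eta^{(t-1)}\nabla_{\mathbf{x}}\hat E(\mathbf{x}^{(t-1)})$, $t=1,\dots,L$, with the random-feature based approximate gradient $\nabla_{\mathbf{x}}\hat E$.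
   Context: Setting: $\mathbf{g}:\mathbb{R}^D\to\mathbb{R}^D$ is a differentiable vector function, $Q$ a differentiable scalar function, $\eta^{(t)}>0$ step sizes. Each random feature $\varphi_\alpha$ is determined by a random projection vector $\boldsymbol{\omega}^\alpha\in\mathbb{R}^D$ and evaluated as a scalar function of $\langle\boldsymbol{\omega}^\alpha,\mathbf{x}\rangle$; the random vectors are generated from a random number generator with fixed seed $\tau$ and regenerated on demand. The distributed memory is $\mathbf{T}=\sum_{\mu=1}^K\boldsymbol{\varphi}(\boldsymbol{\xi}^\mu)\in\mathbb{R}^Y$, the approximate energy is $\hat E(\mathbf{x})=-Q(\langle\mathbf{T},\boldsymbol{\varphi}(\mathbf{g}(\mathbf{x}))\rangle)$ with gradient $\nabla_{\mathbf{x}}\hat E = -Q'(\langle\boldsymbol{\varphi}(\mathbf{g}(\mathbf{x})),\mathbf{T}\rangle)\big(\frac{d\boldsymbol{\varphi}(\mathbf{z})}{d\mathbf{z}}\big|_{\mathbf{z}=\mathbf{g}(\mathbf{x})}^\top\mathbf{T}\big)\frac{d\mathbf{g}(\mathbf{x})}{d\mathbf{x}}$. Subroutines: RF$(\tau,\boldsymbol{\xi})$ resets the generator to seed $\tau$ and, for $\alpha=1,\dots,Y$, samples $\varphi_\alpha$ and sets $p_\alpha\gets\varphi_\alpha(\boldsymbol{\xi})$, returning $\mathbf{p}$. ProcMems: $\mathbf{T}\gets 0_Y$, then for each $\mu$, $\mathbf{T}\gets\mathbf{T}+\mathrm{RF}(\tau,\boldsymbol{\xi}^\mu)$. GradComp$(\tau,\mathbf{T},\mathbf{x})$: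 $\mathbf{p}\gets\mathrm{RF}(\tau,\mathbf{g}(\mathbf{x}))$; for $i=1..D$, $z_i\gets\langle \partial\boldsymbol{\varphi}(\mathbf{y})/\partial y_i|_{\mathbf{y}=\mathbf{g}(\mathbf{x})},\mathbf{T}\rangle$; for $i=1..D$, $z'_i\gets\langle\partial\mathbf{g}(\mathbf{x})/\partial x_i,\mathbf{z}\rangle$; return $-Q'(\langle\mathbf{T},\mathbf{p}\rangle)\,\mathbf{z}'$. Complexity counts arithmetic operations and stored real numbers, with sampling a scalar random number, evaluating scalar elementary functions, and evaluating an entry of $\mathbf{g}$ or its Jacobian at unit cost. *)

theory Defs
  imports Complex_Main "HOL-Library.Monad_Syntax"
begin

text \<open>State of the abstract machine: elapsed time (number of unit-cost operations),
  currently live stored reals, peak number of live stored reals, and the state of the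
  seeded random number generator (current seed and position in its stream).\<close>

record cst =
  tm   :: nat
  live :: nat
  peak :: nat
  seed :: nat
  pos  :: nat

type_synonym 'a M = "cst \<Rightarrow> 'a \<times> cst"

definition init_st :: cst where
  "init_st = \<lparr>tm = 0, live = 0, peak = 0, seed = 0, pos = 0\<rparr>"

definition retM :: "'a \<Rightarrow> 'a M" where
  "retM a = (\<lambda>s. (a, s))"

definition bindM :: "'a M \<Rightarrow> ('a \<Rightarrow> 'b M) \<Rightarrow> 'b M" where
  "bindM m f = (\<lambda>s. case m s of (a, s') \<Rightarrow> f a s')"

adhoc_overloading Monad_Syntax.bind \<rightleftharpoons> bindM

definition tick :: "cst \<Rightarrow> cst" where
  "tick s = s\<lparr>tm := tm s + 1\<rparr>"

definition addM :: "real \<Rightarrow> real \<Rightarrow> real M" where "addM a b = (\<lambda>s. (a + b, tick s))"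
definition subM :: "real \<Rightarrow> real \<Rightarrow> real M" where "subM a b = (\<lambda>s. (a - b, tick s))"
definition mulM :: "real \<Rightarrow> real \<Rightarrow> real M" where "mulM a b = (\<lambda>s. (a * b, tick s))"
definition negM :: "real \<Rightarrow> real M" where "negM a = (\<lambda>s. (- a, tick s))"
definition elemM :: "(real \<Rightarrow> real) \<Rightarrow> real \<Rightarrow> real M" where
  "elemM f t = (\<lambda>s. (f t, tick s))"
definition gentM :: "((nat \<Rightarrow> real) \<Rightarrow> nat \<Rightarrow> real) \<Rightarrow> (nat \<Rightarrow> real) \<Rightarrow> nat \<Rightarrow> real M" where
  "gentM g x j = (\<lambda>s. (g x j, tick s))"
definition jentM :: "((nat \<Rightarrow> real) \<Rightarrow> nat \<Rightarrow> nat \<Rightarrow> real) \<Rightarrow> (nat \<Rightarrow> real) \<Rightarrow> nat \<Rightarrow> nat \<Rightarrow> real M" where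
  "jentM Jg x j i = (\<lambda>s. (Jg x j i, tick s))"

text \<open>The seeded generator: \<open>rng \<tau> k\<close> is the k-th number of the stream with seed \<open>\<tau>\<close>.\<close>
definition sampleM :: "(nat \<Rightarrow> nat \<Rightarrow> real) \<Rightarrow> real M" where
  "sampleM rng = (\<lambda>s. (rng (seed s) (pos s), (tick s)\<lparr>pos := pos s + 1\<rparr>))"
definition resetM :: "nat \<Rightarrow> unit M" where
  "resetM \<tau> = (\<lambda>s. ((), (tick s)\<lparr>seed := \<tau>, pos := 0\<rparr>))"

text \<open>Allocation of n reals (initialised, costing n time units) and freeing.\<close>
definition allocM :: "nat \<Rightarrow> unit M" where
  "allocM n = (\<lambda>s. ((), s\<lparr>tm := tm s + n, live := live s + n,
                          peak := max (peak s) (live s + n)\<rparr>))"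
definition freeM :: "nat \<Rightarrow> unit M" where
  "freeM n = (\<lambda>s. ((), s\<lparr>live := live s - n\<rparr>))"

primrec forM :: "nat list \<Rightarrow> (nat \<Rightarrow> 'a \<Rightarrow> 'a M) \<Rightarrow> 'a \<Rightarrow> 'a M" where
  "forM [] f a = retM a"
| "forM (i # is) f a = bindM (f i a) (forM is f)"

section \<open>The DrDAM algorithm (vectors are \<open>nat \<Rightarrow> real\<close>, indices 0-based)\<close>

definition sample_vec :: "(nat \<Rightarrow> nat \<Rightarrow> real) \<Rightarrow> nat \<Rightarrow> (nat \<Rightarrow> real) M" where
  "sample_vec rng D = forM [0..<D] (\<lambda>i w. do { r \<leftarrow> sampleM rng; retM (w(i := r)) }) (\<lambda>_. 0)"

definition dotp :: "nat \<Rightarrow> (nat \<Rightarrow> real) \<Rightarrow> (nat \<Rightarrow> real) \<Rightarrow> real M" where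
  "dotp n a b = forM [0..<n] (\<lambda>i acc. do { m \<leftarrow> mulM (a i) (b i); addM acc m }) 0"

text \<open>RF: feature alpha is \<open>s \<alpha> \<langle>\<omega>\<^sup>\<alpha>, \<xi>\<rangle>\<close>; returns p (Y reals, to be freed by the caller).\<close>
definition RF :: "(nat \<Rightarrow> nat \<Rightarrow> real) \<Rightarrow> nat \<Rightarrow> nat \<Rightarrow> (nat \<Rightarrow> real \<Rightarrow> real)
    \<Rightarrow> nat \<Rightarrow> (nat \<Rightarrow> real) \<Rightarrow> (nat \<Rightarrow> real) M" where
  "RF rng D Y s \<tau> \<xi> = do {
     resetM \<tau>; allocM Y; allocM D;
     p \<leftarrow> forM [0..<Y] (\<lambda>\<alpha> p. do {
            w \<leftarrow> sample_vec rng D;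
            u \<leftarrow> dotp D w \<xi>;
            v \<leftarrow> elemM (s \<alpha>) u;
            retM (p(\<alpha> := v)) }) (\<lambda>_. 0);
     freeM D;
     retM p }"

definition ProcMems :: "(nat \<Rightarrow> nat \<Rightarrow> real) \<Rightarrow> nat \<Rightarrow> nat \<Rightarrow> nat \<Rightarrow> (nat \<Rightarrow> real \<Rightarrow> real)
    \<Rightarrow> nat \<Rightarrow> (nat \<Rightarrow> nat \<Rightarrow> real) \<Rightarrow> (nat \<Rightarrow> real) M" where
  "ProcMems rng D Y K s \<tau> \<xi> = do {
     allocM Y;
     forM [0..<K] (\<lambda>\<mu> T. do {
        p \<leftarrow> RF rng D Y s \<tau> (\<xi> \<mu>);
        T' \<leftarrow> forM [0..<Y] (\<lambda>\<alpha> T. do { v \<leftarrow> addM (T \<alpha>) (p \<alpha>); retM (T(\<alpha> := v)) }) T;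
        freeM Y;
        retM T' }) (\<lambda>_. 0) }"

text \<open>The loop "for i: z_i = <d phi/d y_i, T>" is realised by one regeneration
  pass over the features, accumulating all D entries of z simultaneously
  (\<open>d \<phi>\<^sub>\<alpha>/d y\<^sub>i = s' \<alpha> \<langle>\<omega>\<^sup>\<alpha>,y\<rangle> \<omega>\<^sup>\<alpha>\<^sub>i\<close>).  Returns a vector of D reals to be freed by the caller.\<close>
definition GradComp :: "(nat \<Rightarrow> nat \<Rightarrow> real) \<Rightarrow> nat \<Rightarrow> nat \<Rightarrow> (nat \<Rightarrow> real \<Rightarrow> real)
    \<Rightarrow> (nat \<Rightarrow> real \<Rightarrow> real) \<Rightarrow> (real \<Rightarrow> real)
    \<Rightarrow> ((nat \<Rightarrow> real) \<Rightarrow> nat \<Rightarrow> real) \<Rightarrow> ((nat \<Rightarrow> real) \<Rightarrow> nat \<Rightarrow> nat \<Rightarrow> real)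
    \<Rightarrow> nat \<Rightarrow> (nat \<Rightarrow> real) \<Rightarrow> (nat \<Rightarrow> real) \<Rightarrow> (nat \<Rightarrow> real) M" where
  "GradComp rng D Y s s' Q' g Jg \<tau> T x = do {
     allocM D;
     y \<leftarrow> forM [0..<D] (\<lambda>j y. do { v \<leftarrow> gentM g x j; retM (y(j := v)) }) (\<lambda>_. 0);
     p \<leftarrow> RF rng D Y s \<tau> y;
     resetM \<tau>; allocM D; allocM D;
     z \<leftarrow> forM [0..<Y] (\<lambda>\<alpha> z. do {
            w \<leftarrow> sample_vec rng D;
            u \<leftarrow> dotp D w y;
            d \<leftarrow> elemM (s' \<alpha>) u;
            c \<leftarrow> mulM (T \<alpha>) d;
            forM [0..<D] (\<lambda>i z. do { m \<leftarrow> mulM c (w i); v \<leftarrow> addM (z i) m; retM (z(i := v)) }) z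
          }) (\<lambda>_. 0);
     freeM D;
     allocM D;
     z' \<leftarrow> forM [0..<D] (\<lambda>i z'. do {
            v \<leftarrow> forM [0..<D] (\<lambda>j acc. do { J \<leftarrow> jentM Jg x j i; m \<leftarrow> mulM J (z j); addM acc m }) 0;
            retM (z'(i := v)) }) (\<lambda>_. 0);
     e \<leftarrow> dotp Y T p;
     q \<leftarrow> elemM Q' e;
     r \<leftarrow> forM [0..<D] (\<lambda>i r. do { v \<leftarrow> mulM q (z' i); v' \<leftarrow> negM v; retM (r(i := v')) }) z';
     freeM Y; freeM D; freeM D;
     retM r }"

definition drdam :: "(nat \<Rightarrow> nat \<Rightarrow> real) \<Rightarrow> nat \<Rightarrow> nat \<Rightarrow> nat \<Rightarrow> nat
    \<Rightarrow> (nat \<Rightarrow> real \<Rightarrow> real) \<Rightarrow> (nat \<Rightarrow> real \<Rightarrow> real) \<Rightarrow> (real \<Rightarrow> real)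
    \<Rightarrow> ((nat \<Rightarrow> real) \<Rightarrow> nat \<Rightarrow> real) \<Rightarrow> ((nat \<Rightarrow> real) \<Rightarrow> nat \<Rightarrow> nat \<Rightarrow> real)
    \<Rightarrow> nat \<Rightarrow> (nat \<Rightarrow> nat \<Rightarrow> real) \<Rightarrow> (nat \<Rightarrow> real) \<Rightarrow> (nat \<Rightarrow> real) \<Rightarrow> (nat \<Rightarrow> real) M" where
  "drdam rng D Y K L s s' Q' g Jg \<tau> \<xi> \<eta> x0 = do {
     T \<leftarrow> ProcMems rng D Y K s \<tau> \<xi>;
     allocM D;
     forM [0..<L] (\<lambda>t x. do {
        gr \<leftarrow> GradComp rng D Y s s' Q' g Jg \<tau> T x;
        x' \<leftarrow> forM [0..<D] (\<lambda>i x'. do { m \<leftarrow> mulM (\<eta> t) (gr i); v \<leftarrow> subM (x' i) m; retM (x'(i := v)) }) x;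
        freeM D;
        retM x' }) x0 }"

definition omega :: "(nat \<Rightarrow> nat \<Rightarrow> real) \<Rightarrow> nat \<Rightarrow> nat \<Rightarrow> nat \<Rightarrow> nat \<Rightarrow> real" where
  "omega rng \<tau> D \<alpha> i = rng \<tau> (\<alpha> * D + i)"

definition phi :: "(nat \<Rightarrow> nat \<Rightarrow> real) \<Rightarrow> nat \<Rightarrow> nat \<Rightarrow> (nat \<Rightarrow> real \<Rightarrow> real)
    \<Rightarrow> nat \<Rightarrow> (nat \<Rightarrow> real) \<Rightarrow> real" where
  "phi rng \<tau> D s \<alpha> z = s \<alpha> (\<Sum>i<D. omega rng \<tau> D \<alpha> i * z i)"

definition Tmem :: "(nat \<Rightarrow> nat \<Rightarrow> real) \<Rightarrow> nat \<Rightarrow> nat \<Rightarrow> nat \<Rightarrow> (nat \<Rightarrow> real \<Rightarrow> real)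
    \<Rightarrow> (nat \<Rightarrow> nat \<Rightarrow> real) \<Rightarrow> nat \<Rightarrow> real" where
  "Tmem rng \<tau> D K s \<xi> \<alpha> = (\<Sum>\<mu><K. phi rng \<tau> D s \<alpha> (\<xi> \<mu>))"

definition Ehat :: "(nat \<Rightarrow> nat \<Rightarrow> real) \<Rightarrow> nat \<Rightarrow> nat \<Rightarrow> nat \<Rightarrow> nat \<Rightarrow> (nat \<Rightarrow> real \<Rightarrow> real)
    \<Rightarrow> (real \<Rightarrow> real) \<Rightarrow> ((nat \<Rightarrow> real) \<Rightarrow> nat \<Rightarrow> real) \<Rightarrow> (nat \<Rightarrow> nat \<Rightarrow> real) \<Rightarrow> (nat \<Rightarrow> real) \<Rightarrow> real" where
  "Ehat rng \<tau> D Y K s Q g \<xi> x =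
     - Q (\<Sum>\<alpha><Y. Tmem rng \<tau> D K s \<xi> \<alpha> * phi rng \<tau> D s \<alpha> (g x))"

text \<open>The i-th entry of the gradient formula from the context
  (\<open>Jg x j i\<close> = \<open>\<partial>g_j/\<partial>x_i\<close>).\<close>
definition gradEhat :: "(nat \<Rightarrow> nat \<Rightarrow> real) \<Rightarrow> nat \<Rightarrow> nat \<Rightarrow> nat \<Rightarrow> nat
    \<Rightarrow> (nat \<Rightarrow> real \<Rightarrow> real) \<Rightarrow> (nat \<Rightarrow> real \<Rightarrow> real) \<Rightarrow> (real \<Rightarrow> real)
    \<Rightarrow> ((nat \<Rightarrow> real) \<Rightarrow> nat \<Rightarrow> real) \<Rightarrow> ((nat \<Rightarrow> real) \<Rightarrow> nat \<Rightarrow> nat \<Rightarrow> real)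
    \<Rightarrow> (nat \<Rightarrow> nat \<Rightarrow> real) \<Rightarrow> (nat \<Rightarrow> real) \<Rightarrow> nat \<Rightarrow> real" where
  "gradEhat rng \<tau> D Y K s s' Q' g Jg \<xi> x i =
     (let T = Tmem rng \<tau> D K s \<xi>; y = g x in
      - Q' (\<Sum>\<alpha><Y. T \<alpha> * phi rng \<tau> D s \<alpha> y) *
        (\<Sum>j<D. Jg x j i *
           (\<Sum>\<alpha><Y. s' \<alpha> (\<Sum>k<D. omega rng \<tau> D \<alpha> k * y k) * omega rng \<tau> D \<alpha> j * T \<alpha>)))"

primrec gd_iter :: "(nat \<Rightarrow> nat \<Rightarrow> real) \<Rightarrow> nat \<Rightarrow> nat \<Rightarrow> nat \<Rightarrow> nat
    \<Rightarrow> (nat \<Rightarrow> real \<Rightarrow> real) \<Rightarrow> (nat \<Rightarrow> real \<Rightarrow> real) \<Rightarrow> (real \<Rightarrow> real)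
    \<Rightarrow> ((nat \<Rightarrow> real) \<Rightarrow> nat \<Rightarrow> real) \<Rightarrow> ((nat \<Rightarrow> real) \<Rightarrow> nat \<Rightarrow> nat \<Rightarrow> real)
    \<Rightarrow> (nat \<Rightarrow> nat \<Rightarrow> real) \<Rightarrow> (nat \<Rightarrow> real) \<Rightarrow> (nat \<Rightarrow> real) \<Rightarrow> nat \<Rightarrow> (nat \<Rightarrow> real)" where
  "gd_iter rng \<tau> D Y K s s' Q' g Jg \<xi> \<eta> x0 0 = x0"
| "gd_iter rng \<tau> D Y K s s' Q' g Jg \<xi> \<eta> x0 (Suc t) =
     (let x = gd_iter rng \<tau> D Y K s s' Q' g Jg \<xi> \<eta> x0 t in
      (\<lambda>i. if i < D then x i - \<eta> t * gradEhat rng \<tau> D Y K s s' Q' g Jg \<xi> x i else x i))"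

end

theory Submission
  imports Defs
begin

lemma bindM_retM[simp]: "bindM m retM = m"
  by (rule ext) (simp add: bindM_def retM_def split: prod.splits)

lemma bindM_assoc: "bindM (bindM m f) h = bindM m (\<lambda>a. bindM (f a) h)"
  by (rule ext) (simp add: bindM_def split: prod.splits)

lemma bindM_apply: "bindM m f s = (case m s of (a, s') \<Rightarrow> f a s')"
  by (simp add: bindM_def)

lemma retM_apply: "retM r st = (r, st)"
  by (simp add: retM_def)

lemma prim_apply:
  "addM a b st = (a + b, st\<lparr>tm := tm st + 1\<rparr>)"
  "subM a b st = (a - b, st\<lparr>tm := tm st + 1\<rparr>)"
  "mulM a b st = (a * b, st\<lparr>tm := tm st + 1\<rparr>)"
  "negM a st = (- a, st\<lparr>tm := tm st + 1\<rparr>)"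
  "elemM f t st = (f t, st\<lparr>tm := tm st + 1\<rparr>)"
  "gentM g x j st = (g x j, st\<lparr>tm := tm st + 1\<rparr>)"
  "jentM Jg x j i st = (Jg x j i, st\<lparr>tm := tm st + 1\<rparr>)"
  "sampleM rng st = (rng (seed st) (pos st), st\<lparr>tm := tm st + 1, pos := pos st + 1\<rparr>)"
  "resetM \<tau> st = ((), st\<lparr>tm := tm st + 1, seed := \<tau>, pos := 0\<rparr>)"
  "allocM n st = ((), st\<lparr>tm := tm st + n, live := live st + n, peak := max (peak st) (live st + n)\<rparr>)"
  "freeM n st = ((), st\<lparr>live := live st - n\<rparr>)"
  by (simp_all add: addM_def subM_def mulM_def negM_def elemM_def gentM_def jentM_def
      sampleM_def resetM_def allocM_def freeM_def tick_def)

lemma forM_snoc: "forM (xs @ [x]) f a = bindM (forM xs f a) (f x)"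
proof (induction xs arbitrary: a)
  case Nil
  then show ?case by (rule ext) (simp add: bindM_def retM_def)
next
  case (Cons y xs)
  have "forM (xs @ [x]) f = (\<lambda>a. bindM (forM xs f a) (f x))" using Cons by (simp add: fun_eq_iff)
  then show ?case by (simp add: bindM_assoc)
qed

lemma bindM_app: "m s = (a, s') \<Longrightarrow> bindM m f s = f a s'"
  by (simp add: bindM_def)

lemma forM_upt_Suc: "forM [0..<Suc n] f a s = (case forM [0..<n] f a s of (b, s') \<Rightarrow> f n b s')"
  by (simp add: forM_snoc bindM_def)

lemma forM_pw:
  assumes "\<And>i a s. i < n \<Longrightarrow> f i a s = (a(i := h i (seed s) (pos s) (a i)), s\<lparr>tm := tm s + c, pos := pos s + d\<rparr>)"
  shows "forM [0..<n] f a s = ((\<lambda>i. if i < n then h i (seed s) (pos s + i * d) (a i) else a i),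
            s\<lparr>tm := tm s + n * c, pos := pos s + n * d\<rparr>)"
  using assms
proof (induction n)
  case 0
  then show ?case by (simp add: retM_def)
next
  case (Suc n)
  note IH = Suc.IH[OF Suc.prems[OF less_SucI]]
  show ?case using IH by (simp del: upt_Suc add: forM_upt_Suc fun_eq_iff Suc.prems algebra_simps)
qed

lemma forM_pw0:
  assumes "\<And>i a s. i < n \<Longrightarrow> f i a s = (a(i := h i (a i)), s\<lparr>tm := tm s + c\<rparr>)"
  shows "forM [0..<n] f a s = ((\<lambda>i. if i < n then h i (a i) else a i), s\<lparr>tm := tm s + n * c\<rparr>)"
  using assms
proof (induction n)
  case 0
  then show ?case by (simp add: retM_def)
next
  case (Suc n)
  note IH = Suc.IH[OF Suc.prems[OF less_SucI]]
  show ?case using IH by (simp del: upt_Suc add: forM_upt_Suc fun_eq_iff Suc.prems algebra_simps)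
qed

lemma forM_acc:
  assumes "\<And>i a s. i < n \<Longrightarrow> f i a s = (a + h i, s\<lparr>tm := tm s + c\<rparr>)"
  shows "forM [0..<n] f (a::real) s = (a + (\<Sum>i<n. h i), s\<lparr>tm := tm s + n * c\<rparr>)"
  using assms
proof (induction n)
  case 0
  then show ?case by (simp add: retM_def)
next
  case (Suc n)
  note IH = Suc.IH[OF Suc.prems[OF less_SucI]]
  show ?case using IH by (simp del: upt_Suc add: forM_upt_Suc Suc.prems algebra_simps)
qed

lemma sample_vec_eq: "sample_vec rng D s = ((\<lambda>i. if i < D then rng (seed s) (pos s + i) else 0),
   s\<lparr>tm := tm s + D, pos := pos s + D\<rparr>)"
  unfolding sample_vec_def
  by (subst forM_pw[where h="\<lambda>i sd ps _. rng sd ps" and c=1 and d=1])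
     (simp_all add: bindM_apply prim_apply retM_apply fun_eq_iff)

lemma dotp_eq: "dotp n a b s = ((\<Sum>i<n. a i * b i), s\<lparr>tm := tm s + 2 * n\<rparr>)"
  unfolding dotp_def
  by (subst forM_acc[where h="\<lambda>i. a i * b i" and c=2])
     (simp_all add: bindM_apply prim_apply retM_apply)

lemma RF_loop: "forM [0..<n] (\<lambda>\<alpha> p. do {
            w \<leftarrow> sample_vec rng D;
            u \<leftarrow> dotp D w \<xi>;
            v \<leftarrow> elemM (s \<alpha>) u;
            retM (p(\<alpha> := v)) }) p0 st =
   ((\<lambda>\<alpha>. if \<alpha> < n then s \<alpha> (\<Sum>k<D. rng (seed st) (pos st + \<alpha> * D + k) * \<xi> k) else p0 \<alpha>),
    st\<lparr>tm := tm st + n * (3 * D + 1), pos := pos st + n * D\<rparr>)"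
  by (subst forM_pw[where h="\<lambda>\<alpha> sd ps _. s \<alpha> (\<Sum>k<D. rng sd (ps + k) * \<xi> k)" and c="3 * D + 1" and d=D])
     (simp_all add: bindM_apply sample_vec_eq dotp_eq prim_apply retM_apply add.assoc)

lemma RF_eq: "RF rng D Y s \<tau> \<xi> st = ((\<lambda>\<alpha>. if \<alpha> < Y then s \<alpha> (\<Sum>k<D. rng \<tau> (\<alpha> * D + k) * \<xi> k) else 0),
   st\<lparr>tm := tm st + (1 + Y + D + Y * (3 * D + 1)), live := live st + Y,
       peak := max (peak st) (live st + Y + D), seed := \<tau>, pos := Y * D\<rparr>)"
  unfolding RF_def
  apply (simp add: bindM_apply RF_loop prim_apply retM_apply)
  apply (simp add: fun_eq_iff)
  done

lemma add_loop: "forM [0..<n] (\<lambda>\<alpha> T. do { v \<leftarrow> addM (T \<alpha>) (p \<alpha>); retM (T(\<alpha> := v)) }) T st =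
   ((\<lambda>\<alpha>. if \<alpha> < n then T \<alpha> + p \<alpha> else T \<alpha>), st\<lparr>tm := tm st + n\<rparr>)"
  by (subst forM_pw0[where h="\<lambda>\<alpha> t. t + p \<alpha>" and c=1]) (simp_all add: bindM_apply prim_apply retM_apply)

lemma add_loop_fun: "forM [0..<n] (\<lambda>\<alpha> T. do { v \<leftarrow> addM (T \<alpha>) (p \<alpha>); retM (T(\<alpha> := v)) }) T =
   (\<lambda>st. ((\<lambda>\<alpha>. if \<alpha> < n then T \<alpha> + p \<alpha> else T \<alpha>), st\<lparr>tm := tm st + n\<rparr>))"
  by (rule ext) (rule add_loop)

lemma PM_body: "(do {
        p \<leftarrow> RF rng D Y s \<tau> (\<xi> \<mu>);
        T' \<leftarrow> forM [0..<Y] (\<lambda>\<alpha> T. do { v \<leftarrow> addM (T \<alpha>) (p \<alpha>); retM (T(\<alpha> := v)) }) T;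
        freeM Y;
        retM T' }) st =
  ((\<lambda>\<alpha>. if \<alpha> < Y then T \<alpha> + s \<alpha> (\<Sum>k<D. rng \<tau> (\<alpha> * D + k) * \<xi> \<mu> k) else T \<alpha>),
   st\<lparr>tm := tm st + (1 + 2 * Y + D + Y * (3 * D + 1)),
      peak := max (peak st) (live st + Y + D), seed := \<tau>, pos := Y * D\<rparr>)"
  apply (simp only: add_loop_fun)
  apply (simp add: bindM_apply RF_eq prim_apply retM_apply)
  apply (simp add: fun_eq_iff)
  done

lemma PM_loop: "forM [0..<n] (\<lambda>\<mu> T. do {
        p \<leftarrow> RF rng D Y s \<tau> (\<xi> \<mu>);
        T' \<leftarrow> forM [0..<Y] (\<lambda>\<alpha> T. do { v \<leftarrow> addM (T \<alpha>) (p \<alpha>); retM (T(\<alpha> := v)) }) T;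
        freeM Y;
        retM T' }) T0 st =
  ((\<lambda>\<alpha>. if \<alpha> < Y then T0 \<alpha> + (\<Sum>\<mu><n. s \<alpha> (\<Sum>k<D. rng \<tau> (\<alpha> * D + k) * \<xi> \<mu> k)) else T0 \<alpha>),
   if n = 0 then st else st\<lparr>tm := tm st + n * (1 + 2 * Y + D + Y * (3 * D + 1)),
      peak := max (peak st) (live st + Y + D), seed := \<tau>, pos := Y * D\<rparr>)"
proof (induction n)
  case 0
  then show ?case by (simp add: fun_eq_iff retM_apply)
next
  case (Suc n)
  show ?case
  proof (cases "n = 0")
    case True
    then show ?thesis
      apply (simp only: forM_upt_Suc upt_0 forM.simps bindM_retM PM_body)
      apply (simp add: fun_eq_iff retM_apply)
      done
  next
    case False
    then show ?thesis
      apply (simp only: forM_upt_Suc Suc.IH)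
      apply (simp only: if_False prod.case PM_body)
      apply (simp add: fun_eq_iff algebra_simps)
      done
  qed
qed

lemma ProcMems_eq: "1 \<le> K \<Longrightarrow> ProcMems rng D Y K s \<tau> \<xi> st =
  ((\<lambda>\<alpha>. if \<alpha> < Y then (\<Sum>\<mu><K. s \<alpha> (\<Sum>k<D. rng \<tau> (\<alpha> * D + k) * \<xi> \<mu> k)) else 0),
   st\<lparr>tm := tm st + Y + K * (1 + 2 * Y + D + Y * (3 * D + 1)), live := live st + Y,
      peak := max (peak st) (live st + Y + Y + D), seed := \<tau>, pos := Y * D\<rparr>)"
  unfolding ProcMems_def
  apply (simp add: bindM_apply PM_loop prim_apply retM_apply)
  apply (simp add: fun_eq_iff algebra_simps)
  done

lemma y_loop_fun: "forM [0..<n] (\<lambda>j y. do { v \<leftarrow> gentM g x j; retM (y(j := v)) }) y0 =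
   (\<lambda>st. ((\<lambda>j. if j < n then g x j else y0 j), st\<lparr>tm := tm st + n\<rparr>))"
  by (rule ext, subst forM_pw0[where h="\<lambda>j _. g x j" and c=1]) (simp_all add: bindM_apply prim_apply retM_apply)

lemma zin_fun: "forM [0..<n] (\<lambda>i z. do { m \<leftarrow> mulM c (w i); v \<leftarrow> addM (z i) m; retM (z(i := v)) }) z =
   (\<lambda>st. ((\<lambda>i. if i < n then z i + c * w i else z i), st\<lparr>tm := tm st + n * 2\<rparr>))"
  by (rule ext, subst forM_pw0[where h="\<lambda>i t. t + c * w i" and c=2]) (simp_all add: bindM_apply prim_apply retM_apply)

lemma zbody: "(do {
            w \<leftarrow> sample_vec rng D;
            u \<leftarrow> dotp D w y;
            d \<leftarrow> elemM (s' \<alpha>) u;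
            c \<leftarrow> mulM (T \<alpha>) d;
            forM [0..<D] (\<lambda>i z. do { m \<leftarrow> mulM c (w i); v \<leftarrow> addM (z i) m; retM (z(i := v)) }) z
          }) st =
   ((\<lambda>i. if i < D then z i + (T \<alpha> * s' \<alpha> (\<Sum>k<D. rng (seed st) (pos st + k) * y k)) * rng (seed st) (pos st + i) else z i),
    st\<lparr>tm := tm st + (5 * D + 2), pos := pos st + D\<rparr>)"
  apply (simp only: zin_fun)
  apply (simp add: bindM_apply prim_apply retM_apply sample_vec_eq dotp_eq)
  apply (simp add: fun_eq_iff)
  done

lemma zloop: "forM [0..<n] (\<lambda>\<alpha> z. do {
            w \<leftarrow> sample_vec rng D;
            u \<leftarrow> dotp D w y;
            d \<leftarrow> elemM (s' \<alpha>) u;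
            c \<leftarrow> mulM (T \<alpha>) d;
            forM [0..<D] (\<lambda>i z. do { m \<leftarrow> mulM c (w i); v \<leftarrow> addM (z i) m; retM (z(i := v)) }) z
          }) z0 st =
   ((\<lambda>i. if i < D then z0 i + (\<Sum>\<alpha><n. (T \<alpha> * s' \<alpha> (\<Sum>k<D. rng (seed st) (pos st + \<alpha> * D + k) * y k)) * rng (seed st) (pos st + \<alpha> * D + i)) else z0 i),
    st\<lparr>tm := tm st + n * (5 * D + 2), pos := pos st + n * D\<rparr>)"
proof (induction n)
  case 0
  then show ?case by (simp add: fun_eq_iff retM_apply)
next
  case (Suc n)
  show ?case
    apply (simp only: forM_upt_Suc Suc.IH)
    apply (simp only: prod.case zbody)
    apply (simp add: fun_eq_iff algebra_simps)
    done
qed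

lemma zloop_fun: "forM [0..<n] (\<lambda>\<alpha> z. do {
            w \<leftarrow> sample_vec rng D;
            u \<leftarrow> dotp D w y;
            d \<leftarrow> elemM (s' \<alpha>) u;
            c \<leftarrow> mulM (T \<alpha>) d;
            forM [0..<D] (\<lambda>i z. do { m \<leftarrow> mulM c (w i); v \<leftarrow> addM (z i) m; retM (z(i := v)) }) z
          }) z0 = (\<lambda>st.
   ((\<lambda>i. if i < D then z0 i + (\<Sum>\<alpha><n. (T \<alpha> * s' \<alpha> (\<Sum>k<D. rng (seed st) (pos st + \<alpha> * D + k) * y k)) * rng (seed st) (pos st + \<alpha> * D + i)) else z0 i),
    st\<lparr>tm := tm st + n * (5 * D + 2), pos := pos st + n * D\<rparr>))"
  by (rule ext) (rule zloop)

lemma acc_fun: "forM [0..<n] (\<lambda>j acc. do { J \<leftarrow> jentM Jg x j i; m \<leftarrow> mulM J (z j); addM acc m }) a =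
   (\<lambda>st. (a + (\<Sum>j<n. Jg x j i * z j), st\<lparr>tm := tm st + n * 3\<rparr>))"
  by (rule ext, subst forM_acc[where h="\<lambda>j. Jg x j i * z j" and c=3]) (simp_all add: bindM_apply prim_apply retM_apply)

lemma z'_loop_fun: "forM [0..<n] (\<lambda>i z'. do {
            v \<leftarrow> forM [0..<D] (\<lambda>j acc. do { J \<leftarrow> jentM Jg x j i; m \<leftarrow> mulM J (z j); addM acc m }) 0;
            retM (z'(i := v)) }) z0 =
   (\<lambda>st. ((\<lambda>i. if i < n then (\<Sum>j<D. Jg x j i * z j) else z0 i), st\<lparr>tm := tm st + n * (D * 3)\<rparr>))"
  by (rule ext, subst forM_pw0[where h="\<lambda>i _. (\<Sum>j<D. Jg x j i * z j)" and c="D * 3"])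
     (simp_all add: bindM_apply prim_apply retM_apply acc_fun)

lemma r_loop_fun: "forM [0..<n] (\<lambda>i r. do { v \<leftarrow> mulM q (z' i); v' \<leftarrow> negM v; retM (r(i := v')) }) r0 =
   (\<lambda>st. ((\<lambda>i. if i < n then - (q * z' i) else r0 i), st\<lparr>tm := tm st + n * 2\<rparr>))"
  by (rule ext, subst forM_pw0[where h="\<lambda>i _. - (q * z' i)" and c=2]) (simp_all add: bindM_apply prim_apply retM_apply)

lemma GradComp_eq: "GradComp rng D Y s s' Q' g Jg \<tau> T x st =
   ((\<lambda>i. if i < D then - (Q' (\<Sum>\<alpha><Y. T \<alpha> * s \<alpha> (\<Sum>k<D. rng \<tau> (\<alpha> * D + k) * g x k)) *
          (\<Sum>j<D. Jg x j i * (\<Sum>\<alpha><Y. (T \<alpha> * s' \<alpha> (\<Sum>k<D. rng \<tau> (\<alpha> * D + k) * g x k)) * rng \<tau> (\<alpha> * D + j))))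
      else 0),
    st\<lparr>tm := tm st + (D + D + (1 + Y + D + Y * (3 * D + 1)) + 1 + 2 * D + Y * (5 * D + 2) + D + D * (D * 3) + 2 * Y + 1 + 2 * D),
       live := live st + D, peak := max (peak st) (live st + Y + 3 * D), seed := \<tau>, pos := Y * D\<rparr>)"
  unfolding GradComp_def
  apply (simp only: y_loop_fun zloop_fun z'_loop_fun r_loop_fun)
  apply (simp add: bindM_apply prim_apply retM_apply RF_eq dotp_eq)
  apply (simp add: fun_eq_iff)
  done

lemma upd_loop_fun: "forM [0..<n] (\<lambda>i x'. do { m \<leftarrow> mulM e (gr i); v \<leftarrow> subM (x' i) m; retM (x'(i := v)) }) x0 =
   (\<lambda>st. ((\<lambda>i. if i < n then x0 i - e * gr i else x0 i), st\<lparr>tm := tm st + n * 2\<rparr>))"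
  by (rule ext, subst forM_pw0[where h="\<lambda>i t. t - e * gr i" and c=2]) (simp_all add: bindM_apply prim_apply retM_apply)

lemma grad_match:
  assumes "\<forall>\<alpha><Y. T \<alpha> = Tmem rng \<tau> D K s \<xi> \<alpha>"
  shows "- (Q' (\<Sum>\<alpha><Y. T \<alpha> * s \<alpha> (\<Sum>k<D. rng \<tau> (\<alpha> * D + k) * g x k)) *
          (\<Sum>j<D. Jg x j i * (\<Sum>\<alpha><Y. (T \<alpha> * s' \<alpha> (\<Sum>k<D. rng \<tau> (\<alpha> * D + k) * g x k)) * rng \<tau> (\<alpha> * D + j))))
    = gradEhat rng \<tau> D Y K s s' Q' g Jg \<xi> x i"
  using assms unfolding gradEhat_def phi_def omega_def Let_def
  by (simp add: mult_ac)

definition CG :: "nat \<Rightarrow> nat \<Rightarrow> nat" where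
  "CG D Y = D + D + (1 + Y + D + Y * (3 * D + 1)) + 1 + 2 * D + Y * (5 * D + 2) + D + D * (D * 3) + 2 * Y + 1 + 2 * D"

lemma DR_body:
  assumes "\<forall>\<alpha><Y. T \<alpha> = Tmem rng \<tau> D K s \<xi> \<alpha>"
  shows "(do {
        gr \<leftarrow> GradComp rng D Y s s' Q' g Jg \<tau> T x;
        x' \<leftarrow> forM [0..<D] (\<lambda>i x'. do { m \<leftarrow> mulM (\<eta> t) (gr i); v \<leftarrow> subM (x' i) m; retM (x'(i := v)) }) x;
        freeM D;
        retM x' }) st =
    ((\<lambda>i. if i < D then x i - \<eta> t * gradEhat rng \<tau> D Y K s s' Q' g Jg \<xi> x i else x i),
     st\<lparr>tm := tm st + (CG D Y + D * 2), peak := max (peak st) (live st + Y + 3 * D), seed := \<tau>, pos := Y * D\<rparr>)"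
  apply (simp only: upd_loop_fun)
  apply (simp add: bindM_apply prim_apply retM_apply GradComp_eq)
  apply (simp add: fun_eq_iff grad_match[OF assms] CG_def)
  done

lemma DR_loop:
  assumes "\<forall>\<alpha><Y. T \<alpha> = Tmem rng \<tau> D K s \<xi> \<alpha>"
  shows "forM [0..<n] (\<lambda>t x. do {
        gr \<leftarrow> GradComp rng D Y s s' Q' g Jg \<tau> T x;
        x' \<leftarrow> forM [0..<D] (\<lambda>i x'. do { m \<leftarrow> mulM (\<eta> t) (gr i); v \<leftarrow> subM (x' i) m; retM (x'(i := v)) }) x;
        freeM D;
        retM x' }) x0 st =
    (gd_iter rng \<tau> D Y K s s' Q' g Jg \<xi> \<eta> x0 n,
     if n = 0 then st else st\<lparr>tm := tm st + n * (CG D Y + D * 2), peak := max (peak st) (live st + Y + 3 * D), seed := \<tau>, pos := Y * D\<rparr>)"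
proof (induction n)
  case 0
  then show ?case by (simp add: retM_apply)
next
  case (Suc n)
  show ?case
  proof (cases "n = 0")
    case True
    then show ?thesis
      apply (simp only: forM_upt_Suc upt_0 forM.simps bindM_retM DR_body[OF assms])
      apply (simp add: fun_eq_iff retM_apply)
      done
  next
    case False
    then show ?thesis
      apply (simp only: forM_upt_Suc Suc.IH)
      apply (simp only: if_False prod.case DR_body[OF assms])
      apply (simp add: fun_eq_iff algebra_simps Let_def)
      done
  qed
qed

lemma arith_bound:
  fixes D Y K L :: nat
  assumes "1 \<le> D" "1 \<le> Y" "1 \<le> K" "1 \<le> L"
  shows "Y + K * (1 + 2 * Y + D + Y * (3 * D + 1)) + D + L * (CG D Y + D * 2) \<le> 30 * (D * (Y * K + L * (Y + D)))"
proof -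
  have a: "D * Y * K \<ge> Y" "D * Y * K \<ge> D" "D * Y * K \<ge> K" "D * Y * K \<ge> K * Y" "D * Y * K \<ge> K * D"
    using assms by (simp_all add: mult_le_mono)
  have b: "L * D * Y \<ge> L" "L * D * Y \<ge> L * D" "L * D * Y \<ge> L * Y"
    using assms by (simp_all add: mult_le_mono)
  have l: "Y + K * (1 + 2 * Y + D + Y * (3 * D + 1)) + D + L * (CG D Y + D * 2) =
     Y + K + 3*(K*Y) + K*D + 3*(D*Y*K) + D + 3*L + 10*(L*D) + 6*(L*Y) + 8*(L*D*Y) + 3*(L*D*D)"
    unfolding CG_def by (simp add: algebra_simps)
  have r: "30 * (D * (Y * K + L * (Y + D))) = 30*(D*Y*K) + 30*(L*D*Y) + 30*(L*D*D)"
    by (simp add: algebra_simps)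
  show ?thesis unfolding l r using a b by linarith
qed

theorem theorem1:
  "\<exists>c::nat. \<forall>(D::nat) (Y::nat) (K::nat) (L::nat) (rng::nat \<Rightarrow> nat \<Rightarrow> real) (\<tau>::nat)
      (s::nat \<Rightarrow> real \<Rightarrow> real) (s'::nat \<Rightarrow> real \<Rightarrow> real) (Q::real \<Rightarrow> real) (Q'::real \<Rightarrow> real)
      (g::(nat \<Rightarrow> real) \<Rightarrow> nat \<Rightarrow> real) (Jg::(nat \<Rightarrow> real) \<Rightarrow> nat \<Rightarrow> nat \<Rightarrow> real)
      (\<xi>::nat \<Rightarrow> nat \<Rightarrow> real) (\<eta>::nat \<Rightarrow> real) (x0::nat \<Rightarrow> real).
     1 \<le> D \<and> 1 \<le> Y \<and> 1 \<le> K \<and> 1 \<le> L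
     \<and> (\<forall>\<alpha> t. (s \<alpha> has_real_derivative s' \<alpha> t) (at t))
     \<and> (\<forall>t. (Q has_real_derivative Q' t) (at t))
     \<and> (\<forall>x j i. j < D \<longrightarrow> i < D \<longrightarrow>
          ((\<lambda>h. g (x(i := x i + h)) j) has_real_derivative Jg x j i) (at 0))
     \<and> (\<forall>t. \<eta> t > 0)
     \<longrightarrow> (let (xL, st) = drdam rng D Y K L s s' Q' g Jg \<tau> \<xi> \<eta> x0 init_st in
           xL = gd_iter rng \<tau> D Y K s s' Q' g Jg \<xi> \<eta> x0 L
           \<and> tm st \<le> c * (D * (Y * K + L * (Y + D)))
           \<and> peak st \<le> c * (Y + D))"
proof (rule exI[of _ 30], intro allI impI)
  fix D Y K L :: nat and rng :: "nat \<Rightarrow> nat \<Rightarrow> real" and \<tau> :: nat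
    and s s' :: "nat \<Rightarrow> real \<Rightarrow> real" and Q Q' :: "real \<Rightarrow> real"
    and g :: "(nat \<Rightarrow> real) \<Rightarrow> nat \<Rightarrow> real" and Jg :: "(nat \<Rightarrow> real) \<Rightarrow> nat \<Rightarrow> nat \<Rightarrow> real"
    and \<xi> :: "nat \<Rightarrow> nat \<Rightarrow> real" and \<eta> :: "nat \<Rightarrow> real" and x0 :: "nat \<Rightarrow> real"
  assume H: "1 \<le> D \<and> 1 \<le> Y \<and> 1 \<le> K \<and> 1 \<le> L
     \<and> (\<forall>\<alpha> t. (s \<alpha> has_real_derivative s' \<alpha> t) (at t))
     \<and> (\<forall>t. (Q has_real_derivative Q' t) (at t))
     \<and> (\<forall>x j i. j < D \<longrightarrow> i < D \<longrightarrow>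
          ((\<lambda>h. g (x(i := x i + h)) j) has_real_derivative Jg x j i) (at 0))
     \<and> (\<forall>t. \<eta> t > 0)"
  then have D: "1 \<le> D" and Y: "1 \<le> Y" and K: "1 \<le> K" and L: "1 \<le> L" by auto
  define Tv where "Tv = (\<lambda>\<alpha>. if \<alpha> < Y then (\<Sum>\<mu><K. s \<alpha> (\<Sum>k<D. rng \<tau> (\<alpha> * D + k) * \<xi> \<mu> k)) else 0)"
  define st1 where "st1 = init_st\<lparr>tm := tm init_st + Y + K * (1 + 2 * Y + D + Y * (3 * D + 1)), live := live init_st + Y,
      peak := max (peak init_st) (live init_st + Y + Y + D), seed := \<tau>, pos := Y * D\<rparr>"
  define st2 where "st2 = st1\<lparr>tm := tm st1 + D, live := live st1 + D, peak := max (peak st1) (live st1 + D)\<rparr>"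
  have s1: "ProcMems rng D Y K s \<tau> \<xi> init_st = (Tv, st1)"
    unfolding Tv_def st1_def by (rule ProcMems_eq[OF K])
  have hT: "\<forall>\<alpha><Y. Tv \<alpha> = Tmem rng \<tau> D K s \<xi> \<alpha>"
    unfolding Tv_def Tmem_def phi_def omega_def by simp
  have s2: "allocM D st1 = ((), st2)" unfolding st2_def by (simp add: prim_apply)
  have eq: "drdam rng D Y K L s s' Q' g Jg \<tau> \<xi> \<eta> x0 init_st =
     (gd_iter rng \<tau> D Y K s s' Q' g Jg \<xi> \<eta> x0 L,
      st2\<lparr>tm := tm st2 + L * (CG D Y + D * 2), peak := max (peak st2) (live st2 + Y + 3 * D), seed := \<tau>, pos := Y * D\<rparr>)"
    unfolding drdam_def
    apply (simp only: bindM_app[of "ProcMems rng D Y K s \<tau> \<xi>" init_st Tv st1, OF s1])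
    apply (simp only: bindM_app[of "allocM D" st1 "()" st2, OF s2])
    apply (simp only: DR_loop[OF hT])
    using L by simp
  have tmv: "tm st2 + L * (CG D Y + D * 2) = Y + K * (1 + 2 * Y + D + Y * (3 * D + 1)) + D + L * (CG D Y + D * 2)"
    unfolding st2_def st1_def init_st_def by simp
  have pkv: "max (peak st2) (live st2 + Y + 3 * D) \<le> 30 * (Y + D)"
    unfolding st2_def st1_def init_st_def by simp
  show "let (xL, st) = drdam rng D Y K L s s' Q' g Jg \<tau> \<xi> \<eta> x0 init_st in
           xL = gd_iter rng \<tau> D Y K s s' Q' g Jg \<xi> \<eta> x0 L
           \<and> tm st \<le> 30 * (D * (Y * K + L * (Y + D)))
           \<and> peak st \<le> 30 * (Y + D)"
    using arith_bound[OF D Y K L] tmv pkv by (simp add: eq)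
qed

end
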